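(* Assume each $f_i$ is $\mu$-strongly convex with $\mu>0$ and has $L$-Lipschitz gradient, let $x^*$ be the minimiser of $F=f+h$, and run SAGA with step size $\gamma=\frac{1}{2(\mu n+L)}$ starting from $x^0$ with $\phi_i^0=x^0$ for all $i$. Then for all $k\ge0$, \[ \mathbb{E}\Vert x^{k}-x^{*}\Vert^{2}\leq\left(1-\frac{\mu}{2(\mu n+L)}\right)^{k}\left[\Vert x^{0}-x^{*}\Vert^{2} + \frac{n}{\mu n + L}\left[f(x^{0}) -\langle f'(x^{*}),x^{0}-x^{*}\rangle -f(x^{*})\right]\right], \] where the expectation is over all random index choices up to step $k$.
   Context: Setting: $f(x)=\frac1n\sum_{i=1}^n f_i(x)$ with each $f_i\colon\mathbb{R}^d\to\mathbb{R}$ convex and differentiable with $L$-Lipschitz gradient $f_i'$; $h\colon\mathbb{R}^d\to\mathbb{R}\cup\{+\infty\}$ is proper, closed, convex; $F=f+h$. The proximal operator is $\mathrm{prox}^h_\gamma(y)=\operatorname{argmin}_{x}\{h(x)+\frac{1}{2\gamma}\Vert x-y\Vert^2\}$. SAGA algorithm with step size $\gamma>0$: start from $x^0\in\mathbb{R}^d$ and $\phi_i^0=x^0$ for all $i$. At iteration $k+1$, given $x^k$ and $\phi_1^k,\dots,\phi_n^k$: pick $j$ uniformly at random from $\{1,\dots,n\}$ (independently of the past); set $\phi_j^{k+1}=x^k$ and $\phi_i^{k+1}=\phi_i^k$ for $i\neq j$; set $w^{k+1}=x^k-\gamma\big[f_j'(\phi_j^{k+1})-f_j'(\phi_j^k)+\frac1n\sum_{i=1}^n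 f_i'(\phi_i^k)\big]$ and $x^{k+1}=\mathrm{prox}^h_\gamma(w^{k+1})$. *)

theory Defs
  imports "HOL-Analysis.Analysis"
begin

definition strongly_convex :: "real \<Rightarrow> ('a::real_normed_vector \<Rightarrow> real) \<Rightarrow> bool" where
  "strongly_convex \<mu> g \<longleftrightarrow>
     (\<forall>x y t. 0 \<le> t \<and> t \<le> 1 \<longrightarrow>
        g (t *\<^sub>R x + (1 - t) *\<^sub>R y) \<le> t * g x + (1 - t) * g y - \<mu> / 2 * t * (1 - t) * (norm (x - y))\<^sup>2)"

definition proper_fun :: "('a \<Rightarrow> ereal) \<Rightarrow> bool" where
  "proper_fun h \<longleftrightarrow> (\<forall>x. h x \<noteq> -\<infinity>) \<and> (\<exists>x. h x \<noteq> \<infinity>)"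

definition closed_fun :: "('a::topological_space \<Rightarrow> ereal) \<Rightarrow> bool" where
  "closed_fun h \<longleftrightarrow> closed {(x, r::real). h x \<le> ereal r}"

definition convex_fun :: "('a::real_vector \<Rightarrow> ereal) \<Rightarrow> bool" where
  "convex_fun h \<longleftrightarrow>
     (\<forall>x y t. 0 \<le> t \<and> t \<le> 1 \<longrightarrow>
        h (t *\<^sub>R x + (1 - t) *\<^sub>R y) \<le> ereal t * h x + ereal (1 - t) * h y)"

text \<open>Proximal operator: the (unique, under the standing assumptions) minimiser.\<close>
definition prox :: "('a::real_normed_vector \<Rightarrow> ereal) \<Rightarrow> real \<Rightarrow> 'a \<Rightarrow> 'a" where
  "prox h \<gamma> y = (THE x. \<forall>z. h x + ereal ((norm (x - y))\<^sup>2 / (2 * \<gamma>))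
                              \<le> h z + ereal ((norm (z - y))\<^sup>2 / (2 * \<gamma>)))"

text \<open>One SAGA iteration with sampled index j (indices are 0..n-1). State = (x, phi).
  g i is the gradient f_i'.\<close>
definition saga_step ::
  "nat \<Rightarrow> (nat \<Rightarrow> 'a \<Rightarrow> 'a::real_normed_vector) \<Rightarrow> ('a \<Rightarrow> ereal) \<Rightarrow> real
     \<Rightarrow> 'a \<times> (nat \<Rightarrow> 'a) \<Rightarrow> nat \<Rightarrow> 'a \<times> (nat \<Rightarrow> 'a)" where
  "saga_step n g h \<gamma> st j =
     (let x = fst st; \<phi> = snd st; \<phi>' = \<phi>(j := x);
          w = x - \<gamma> *\<^sub>R (g j (\<phi>' j) - g j (\<phi> j) + (1 / real n) *\<^sub>R (\<Sum>i<n. g i (\<phi> i)))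
      in (prox h \<gamma> w, \<phi>'))"

text \<open>SAGA run along the index sequence js (js ! 0 is the index chosen at iteration 1),
  starting from x0 with phi_i^0 = x0.\<close>
definition saga_run ::
  "nat \<Rightarrow> (nat \<Rightarrow> 'a \<Rightarrow> 'a::real_normed_vector) \<Rightarrow> ('a \<Rightarrow> ereal) \<Rightarrow> real \<Rightarrow> 'a
     \<Rightarrow> nat list \<Rightarrow> 'a \<times> (nat \<Rightarrow> 'a)" where
  "saga_run n g h \<gamma> x0 js = foldl (saga_step n g h \<gamma>) (x0, \<lambda>_. x0) js"

text \<open>Expectation over k i.i.d. uniform indices from {0..<n}: uniform average over all
  index sequences of length k.\<close>
definition index_seqs :: "nat \<Rightarrow> nat \<Rightarrow> nat list set" where
  "index_seqs n k = {js. length js = k \<and> set js \<subseteq> {..<n}}"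

definition expect_seq :: "nat \<Rightarrow> nat \<Rightarrow> (nat list \<Rightarrow> real) \<Rightarrow> real" where
  "expect_seq n k X = (\<Sum>js\<in>index_seqs n k. X js) / real n ^ k"

end

theory Submission
  imports Defs
begin
lemma deriv_line:
  fixes F :: "'a::euclidean_space \<Rightarrow> real"
  assumes "(F has_derivative (\<lambda>v. G (x + t *\<^sub>R d) \<bullet> v)) (at (x + t *\<^sub>R d))"
  shows "((\<lambda>s. F (x + s *\<^sub>R d)) has_real_derivative (G (x + t *\<^sub>R d) \<bullet> d)) (at t)"
proof -
  have l: "((\<lambda>s. x + s *\<^sub>R d) has_derivative (\<lambda>s. s *\<^sub>R d)) (at t)"
    by (auto intro!: derivative_eq_intros)
  have "((\<lambda>s. F (x + s *\<^sub>R d)) has_derivative (\<lambda>s. G (x + t *\<^sub>R d) \<bullet> (s *\<^sub>R d))) (at t)"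
    using has_derivative_compose[OF l assms] by (simp add: o_def)
  moreover have "(\<lambda>s. G (x + t *\<^sub>R d) \<bullet> (s *\<^sub>R d)) = (*) (G (x + t *\<^sub>R d) \<bullet> d)"
    by (auto simp: mult.commute)
  ultimately show ?thesis by (simp add: has_field_derivative_def)
qed

lemma sc_lower:
  fixes F :: "'a::euclidean_space \<Rightarrow> real"
  assumes sc: "strongly_convex \<mu> F" and der: "(F has_derivative (\<lambda>v. G x \<bullet> v)) (at x)"
  shows "F y \<ge> F x + G x \<bullet> (y - x) + \<mu>/2 * (norm (y - x))\<^sup>2"
proof -
  define d where "d = y - x"
  define p where "p s = F (x + s *\<^sub>R d)" for s
  have "(p has_real_derivative (G x \<bullet> d)) (at 0)"
    unfolding p_def using deriv_line[of F G x 0 d] der by simp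
  hence lim: "((\<lambda>s. (p s - p 0) / (s - 0)) \<longlongrightarrow> G x \<bullet> d) (at_right 0)"
    unfolding has_field_derivative_iff by (rule tendsto_mono[OF at_le, rotated]) auto
  have lim2: "((\<lambda>s. F y - F x - \<mu>/2 * (1 - s) * (norm d)\<^sup>2) \<longlongrightarrow> F y - F x - \<mu>/2 * (1 - 0) * (norm d)\<^sup>2) (at_right 0)"
    by (intro tendsto_intros)
  have ev: "eventually (\<lambda>s. (p s - p 0) / (s - 0) \<le> F y - F x - \<mu>/2 * (1 - s) * (norm d)\<^sup>2) (at_right (0::real))"
    unfolding eventually_at_right_field
  proof (intro exI[of _ 1] conjI allI impI)
    fix s :: real assume s0: "0 < s" and s1: "s < 1"
    note s = s0 s1
    have eq: "x + s *\<^sub>R d = s *\<^sub>R y + (1 - s) *\<^sub>R x"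
      by (simp add: d_def algebra_simps)
    have "F (s *\<^sub>R y + (1 - s) *\<^sub>R x) \<le> s * F y + (1 - s) * F x - \<mu> / 2 * s * (1 - s) * (norm (y - x))\<^sup>2"
      using sc s unfolding strongly_convex_def by auto
    hence "p s - p 0 \<le> s * (F y - F x - \<mu>/2 * (1 - s) * (norm d)\<^sup>2)"
      unfolding p_def eq d_def by (simp add: algebra_simps)
    thus "(p s - p 0) / (s - 0) \<le> F y - F x - \<mu>/2 * (1 - s) * (norm d)\<^sup>2"
      using s by (simp add: pos_divide_le_eq mult.commute)
  qed simp
  have "G x \<bullet> d \<le> F y - F x - \<mu>/2 * (1 - 0) * (norm d)\<^sup>2"
    by (rule tendsto_le[OF trivial_limit_at_right_real lim2 lim ev])
  thus ?thesis by (simp add: d_def)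
qed

lemma smooth_upper:
  fixes F :: "'a::euclidean_space \<Rightarrow> real"
  assumes der: "\<And>z. (F has_derivative (\<lambda>v. G z \<bullet> v)) (at z)"
    and lip: "\<And>a b. norm (G a - G b) \<le> L * norm (a - b)"
  shows "F y \<le> F x + G x \<bullet> (y - x) + L/2 * (norm (y - x))\<^sup>2"
proof -
  define d where "d = y - x"
  define p where "p s = F (x + s *\<^sub>R d) - s * (G x \<bullet> d) - L/2 * s\<^sup>2 * (norm d)\<^sup>2" for s
  define p' where "p' s = G (x + s *\<^sub>R d) \<bullet> d - G x \<bullet> d - L * s * (norm d)\<^sup>2" for s
  have D: "DERIV p s :> p' s" for s
    unfolding p_def p'_def
    by (rule derivative_eq_intros deriv_line der refl)+ (simp add: power2_eq_square algebra_simps)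
  obtain z where z: "0 < z" "z < 1" "p 1 - p 0 = (1 - 0) * p' z"
    using MVT2[of 0 1 p p'] D by auto
  have "p' z = (G (x + z *\<^sub>R d) - G x) \<bullet> d - L * z * (norm d)\<^sup>2"
    by (simp add: p'_def inner_diff_left)
  also have "\<dots> \<le> norm (G (x + z *\<^sub>R d) - G x) * norm d - L * z * (norm d)\<^sup>2"
    using norm_cauchy_schwarz by simp
  also have "\<dots> \<le> L * norm (z *\<^sub>R d) * norm d - L * z * (norm d)\<^sup>2"
    using lip[of "x + z *\<^sub>R d" x] by (intro diff_right_mono mult_right_mono) auto
  also have "\<dots> = 0" using z by (simp add: power2_eq_square)
  finally have "p 1 \<le> p 0" using z by simp
  thus ?thesis by (simp add: p_def d_def)
qed


lemma cocoercive_t: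
  fixes F :: "'a::euclidean_space \<Rightarrow> real" and x y :: 'a
  assumes S: "\<And>a b. F b \<ge> F a + G a \<bullet> (b - a) + \<mu>/2 * (norm (b - a))\<^sup>2"
    and Q: "\<And>a b. F b \<le> F a + G a \<bullet> (b - a) + L/2 * (norm (b - a))\<^sup>2"
    and m: "m \<le> \<mu>"
  defines "r \<equiv> G y - G x - m *\<^sub>R (y - x)"
  shows "F y - F x - G x \<bullet> (y - x) - m/2 * (norm (y - x))\<^sup>2 \<ge> t * (norm r)\<^sup>2 - (L - m) * t\<^sup>2 / 2 * (norm r)\<^sup>2"
proof -
  define e where "e = y - x"
  define z where "z = y - t *\<^sub>R r"
  have q: "F z \<le> F y - t * (G y \<bullet> r) + L/2 * t\<^sup>2 * (norm r)\<^sup>2"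
    using Q[where a=y and b=z] by (simp add: z_def inner_minus_right power_mult_distrib)
  have s: "F z \<ge> F x + G x \<bullet> (e - t *\<^sub>R r) + \<mu>/2 * (norm (e - t *\<^sub>R r))\<^sup>2"
    using S[where a=x and b=z] by (simp add: z_def e_def algebra_simps)
  have "m/2 * (norm (e - t *\<^sub>R r))\<^sup>2 \<le> \<mu>/2 * (norm (e - t *\<^sub>R r))\<^sup>2"
    using m by (intro mult_right_mono) auto
  have n2: "(norm (e - t *\<^sub>R r))\<^sup>2 = (norm e)\<^sup>2 - 2 * t * (e \<bullet> r) + t\<^sup>2 * (norm r)\<^sup>2"
    by (simp only: power2_norm_eq_inner) (simp add: inner_diff_left inner_diff_right inner_commute algebra_simps power2_eq_square)
  have rr: "(norm r)\<^sup>2 = G y \<bullet> r - G x \<bullet> r - m * (e \<bullet> r)"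
    by (simp add: power2_norm_eq_inner r_def e_def inner_diff_left)
  have gx: "G x \<bullet> (e - t *\<^sub>R r) = G x \<bullet> e - t * (G x \<bullet> r)"
    by (simp add: inner_diff_right)
  define A where "A = (norm (e - t *\<^sub>R r))\<^sup>2"
  have s': "F z \<ge> F x + (G x \<bullet> e - t * (G x \<bullet> r)) + \<mu>/2 * A"
    using s gx unfolding A_def by simp
  have mA: "m/2 * A \<le> \<mu>/2 * A" using \<open>m/2 * _ \<le> _\<close> unfolding A_def .
  have n2m: "m/2 * A = m/2 * (norm e)\<^sup>2 - t * m * (e \<bullet> r) + m/2 * t\<^sup>2 * (norm r)\<^sup>2"
    unfolding A_def n2 by (simp add: algebra_simps)
  have rrt: "t * (G y \<bullet> r) = t * (G x \<bullet> r) + t * m * (e \<bullet> r) + t * (norm r)\<^sup>2"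
    unfolding rr by (simp add: algebra_simps)
  have lm: "(L - m) * t\<^sup>2 / 2 * (norm r)\<^sup>2 = L/2 * t\<^sup>2 * (norm r)\<^sup>2 - m/2 * t\<^sup>2 * (norm r)\<^sup>2"
    by (simp add: algebra_simps diff_divide_distrib)
  show ?thesis unfolding e_def[symmetric] lm
    using q s' mA n2m rrt by linarith
qed

lemma cocoercive:
  fixes F :: "'a::euclidean_space \<Rightarrow> real"
  assumes S: "\<And>a b. F b \<ge> F a + G a \<bullet> (b - a) + \<mu>/2 * (norm (b - a))\<^sup>2"
    and Q: "\<And>a b. F b \<le> F a + G a \<bullet> (b - a) + L/2 * (norm (b - a))\<^sup>2"
    and m: "m \<le> \<mu>" and mL: "m \<le> L"
  shows "2 * (L - m) * (F y - F x - G x \<bullet> (y - x) - m/2 * (norm (y - x))\<^sup>2) \<ge> (norm (G y - G x - m *\<^sub>R (y - x)))\<^sup>2"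
proof -
  define E where "E = F y - F x - G x \<bullet> (y - x) - m/2 * (norm (y - x))\<^sup>2"
  define R where "R = (norm (G y - G x - m *\<^sub>R (y - x)))\<^sup>2"
  have T: "E \<ge> t * R - (L - m) * t\<^sup>2 / 2 * R" for t
    using cocoercive_t[OF S Q m, where x=x and y=y and t=t] unfolding E_def R_def by simp
  have R0: "R \<ge> 0" by (simp add: R_def)
  show ?thesis
  proof (cases "L = m")
    case False
    hence K: "L - m > 0" using mL by simp
    have "E \<ge> R / (L - m) - (L - m) * (1/(L-m))\<^sup>2 / 2 * R"
      using T[of "1/(L-m)"] by simp
    also have "(L - m) * (1/(L-m))\<^sup>2 = 1 / (L - m)"
      using K by (simp add: power2_eq_square)
    hence "(L - m) * (1/(L-m))\<^sup>2 / 2 * R = R / (2 * (L - m))" by simp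
    finally have "R / (L - m) - R / (2 * (L - m)) \<le> E" .
    moreover have "R / D - R / (2 * D) = R / (2 * D)" if "D > 0" for D :: real
      using that by (simp add: field_simps)
    hence "R / (L - m) - R / (2 * (L - m)) = R / (2 * (L - m))" using K by blast
    ultimately have "R / (2 * (L - m)) \<le> E" by simp
    hence "R \<le> E * (2 * (L - m))" using K by (simp add: pos_divide_le_eq)
    thus ?thesis unfolding E_def[symmetric] R_def[symmetric] by (simp add: algebra_simps)
  next
    case True
    have "R = 0"
    proof (rule ccontr)
      assume "R \<noteq> 0" hence "R > 0" using R0 by simp
      have "E \<ge> ((\<bar>E\<bar> + 1) / R) * R" using T[of "(\<bar>E\<bar> + 1) / R"] True by simp
      thus False using \<open>R > 0\<close> by simp
    qed
    thus ?thesis using True unfolding E_def[symmetric] R_def[symmetric] by simp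
  qed
qed

lemma mu_le_L:
  fixes F :: "'a::euclidean_space \<Rightarrow> real"
  assumes S: "\<And>a b. F b \<ge> F a + G a \<bullet> (b - a) + \<mu>/2 * (norm (b - a))\<^sup>2"
    and Q: "\<And>a b. F b \<le> F a + G a \<bullet> (b - a) + L/2 * (norm (b - a))\<^sup>2"
  shows "\<mu> \<le> L"
proof -
  obtain e :: 'a where e: "e \<in> Basis" using nonempty_Basis by blast
  have "norm e = 1" using e by simp
  thus ?thesis using S[where a=0 and b=e] Q[where a=0 and b=e] by simp
qed

lemma limit_t:
  fixes A B C :: real
  assumes "\<And>t. 0 < t \<Longrightarrow> t \<le> 1 \<Longrightarrow> A \<le> B + t * C"
  shows "A \<le> B"
proof (rule ccontr)
  assume "\<not> A \<le> B" hence AB: "A > B" by simp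
  show False
  proof (cases "C \<le> 0")
    case True thus False using assms[of 1] AB by simp
  next
    case False
    define t where "t = min 1 ((A - B) / (2 * C))"
    have t0: "t > 0" using AB False by (simp add: t_def)
    have "t * C \<le> (A - B) / (2 * C) * C" unfolding t_def using False by (intro mult_right_mono) auto
    also have "\<dots> = (A - B) / 2" using False by simp
    finally show False using assms[of t] t0 AB by (simp add: t_def)
  qed
qed

lemma quad_bound:
  fixes u A B :: real
  assumes "u \<ge> 0" "A \<ge> 0" "B \<ge> 0" "u\<^sup>2 \<le> A + B * u"
  shows "u \<le> 1 + A + B"
proof (cases "u \<le> 1")
  case False
  have "A \<le> A * u" using False assms(2) by (simp add: mult_le_cancel_left1)
  hence "u * u \<le> (A + B) * u" using assms(4) by (simp add: power2_eq_square distrib_right)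
  hence "u \<le> A + B" using False by simp
  thus ?thesis using assms by simp
qed (use assms in simp)

locale proxsetup =
  fixes h :: "'a::euclidean_space \<Rightarrow> ereal" and a :: real and p :: 'a and z0 :: 'a and \<gamma> :: real
  assumes proper: "proper_fun h" and closedh: "closed_fun h" and convh: "convex_fun h"
    and minor: "\<And>z. ereal (a - p \<bullet> z) \<le> h z"
    and z0: "h z0 \<noteq> \<infinity>" and gpos: "\<gamma> > 0"
begin

definition "Phi y z = h z + ereal ((norm (z - y))\<^sup>2 / (2 * \<gamma>))"

lemma notminf: "h z \<noteq> -\<infinity>" using proper unfolding proper_fun_def by auto

lemma finite_cases: obtains r where "h z = ereal r" | "h z = \<infinity>"
  using notminf[of z] by (cases "h z") auto

lemma exists_min: "\<exists>q. \<forall>z. Phi y q \<le> Phi y z"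
proof -
  obtain hz0 where hz0: "h z0 = ereal hz0" using z0 notminf[of z0] by (cases "h z0") auto
  define C where "C = hz0 + (norm (z0 - y))\<^sup>2 / (2 * \<gamma>)"
  define K where "K = {(z, r::real). h z \<le> ereal r} \<inter> {q. snd q + (norm (fst q - y))\<^sup>2 / (2 * \<gamma>) \<le> C}"
  have "closed {(z, r::real). h z \<le> ereal r}" using closedh unfolding closed_fun_def .
  moreover have "closed {q :: 'a \<times> real. snd q + (norm (fst q - y))\<^sup>2 / (2 * \<gamma>) \<le> C}"
    using gpos by (intro closed_Collect_le continuous_intros) auto
  ultimately have cl: "closed K" unfolding K_def by (rule closed_Int)
  define A1 where "A1 = 2 * \<gamma> * \<bar>C - a + p \<bullet> y\<bar>"
  define B1 where "B1 = 2 * \<gamma> * norm p"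
  define R where "R = norm y + (1 + A1 + B1)"
  have bnd: "norm z \<le> R \<and> \<bar>r\<bar> \<le> \<bar>C\<bar> + \<bar>a\<bar> + norm p * R" if "(z, r) \<in> K" for z r
  proof -
    have e1: "h z \<le> ereal r" and e2: "r + (norm (z - y))\<^sup>2 / (2 * \<gamma>) \<le> C" using that by (auto simp: K_def)
    have ar: "a - p \<bullet> z \<le> r" using order_trans[OF minor e1] by simp
    define u where "u = norm (z - y)"
    have pz: "p \<bullet> z = p \<bullet> y + p \<bullet> (z - y)" by (simp add: inner_diff_right)
    have "p \<bullet> (z - y) \<le> norm p * u" unfolding u_def by (rule norm_cauchy_schwarz)
    hence "u\<^sup>2 / (2 * \<gamma>) \<le> (C - a + p \<bullet> y) + norm p * u" using e2 ar pz unfolding u_def by linarith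
    hence "u\<^sup>2 \<le> 2 * \<gamma> * ((C - a + p \<bullet> y) + norm p * u)" using gpos by (simp add: divide_le_eq mult.commute)
    also have "\<dots> = 2 * \<gamma> * (C - a + p \<bullet> y) + B1 * u" by (simp add: B1_def algebra_simps)
    also have "\<dots> \<le> A1 + B1 * u" unfolding A1_def using gpos by (intro add_right_mono mult_left_mono) auto
    finally have "u \<le> 1 + A1 + B1" using gpos by (intro quad_bound) (auto simp: u_def A1_def B1_def)
    hence zR: "norm z \<le> R" unfolding R_def u_def using norm_triangle_ineq2[of z y] by linarith
    have "p \<bullet> z \<le> norm p * norm z" by (rule norm_cauchy_schwarz)
    also have "\<dots> \<le> norm p * R" using zR by (intro mult_left_mono) auto
    finally have "a - norm p * R \<le> r" using ar by simp
    moreover have "r \<le> C" using e2 gpos by (smt (verit) divide_nonneg_pos zero_le_power2)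
    ultimately show ?thesis using zR by (smt (verit) norm_ge_zero mult_nonneg_nonneg)
  qed
  have "bounded K" unfolding bounded_iff
  proof (intro exI ballI)
    fix q assume "q \<in> K"
    then obtain z r where q: "q = (z, r)" "(z, r) \<in> K" by (cases q) auto
    have "norm q \<le> norm z + norm r" using q norm_Pair_le[of z r] by simp
    also have "\<dots> \<le> R + (\<bar>C\<bar> + \<bar>a\<bar> + norm p * R)" using bnd[OF q(2)] by simp
    finally show "norm q \<le> R + (\<bar>C\<bar> + \<bar>a\<bar> + norm p * R)" .
  qed
  hence cpt: "compact K" using cl by (simp add: compact_eq_bounded_closed)
  have inK: "(z0, hz0) \<in> K" by (simp add: K_def hz0 C_def)
  have "continuous_on K (\<lambda>q. snd q + (norm (fst q - y))\<^sup>2 / (2 * \<gamma>))"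
    using gpos by (intro continuous_intros) auto
  then obtain qm where qm: "qm \<in> K" "\<And>q. q \<in> K \<Longrightarrow> snd qm + (norm (fst qm - y))\<^sup>2 / (2 * \<gamma>) \<le> snd q + (norm (fst q - y))\<^sup>2 / (2 * \<gamma>)"
    using continuous_attains_inf[OF cpt] inK by blast
  obtain zm rm where zm: "qm = (zm, rm)" by (cases qm)
  have hzm: "h zm \<le> ereal rm" and zmC: "rm + (norm (zm - y))\<^sup>2 / (2 * \<gamma>) \<le> C" using qm(1) zm by (auto simp: K_def)
  show ?thesis
  proof (intro exI allI)
    fix z
    have "Phi y zm \<le> ereal rm + ereal ((norm (zm - y))\<^sup>2 / (2 * \<gamma>))" unfolding Phi_def
      using hzm by (intro add_mono) auto
    also have "\<dots> \<le> Phi y z"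
    proof (cases rule: finite_cases[of z])
      case (1 r)
      show ?thesis
      proof (cases "r + (norm (z - y))\<^sup>2 / (2 * \<gamma>) \<le> C")
        case True
        hence "(z, r) \<in> K" using 1 by (simp add: K_def)
        from qm(2)[OF this] show ?thesis using zm 1 by (simp add: Phi_def)
      next
        case False
        thus ?thesis using zmC 1 by (simp add: Phi_def)
      qed
    qed (simp add: Phi_def)
    finally show "Phi y zm \<le> Phi y z" .
  qed
qed

lemma min_finite:
  assumes "\<forall>z. Phi y q \<le> Phi y z"
  shows "h q = ereal (real_of_ereal (h q))"
proof -
  have "Phi y q \<le> Phi y z0" using assms by blast
  hence "h q \<noteq> \<infinity>" using z0 notminf[of z0] by (cases "h z0"; cases "h q") (auto simp: Phi_def)
  thus ?thesis using notminf[of q] by (cases "h q") auto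
qed

lemma par0:
  fixes A B :: 'a
  shows "(norm (A + B))\<^sup>2 + (norm (A - B))\<^sup>2 = 2 * (norm A)\<^sup>2 + 2 * (norm B)\<^sup>2"
  by (simp only: power2_norm_eq_inner) (simp add: inner_add_left inner_add_right inner_diff_left inner_diff_right inner_commute)

lemma parallelogram:
  fixes q1 q2 y :: 'a
  shows "(norm ((1/2) *\<^sub>R q1 + (1 - 1/2) *\<^sub>R q2 - y))\<^sup>2 = ((norm (q1 - y))\<^sup>2 + (norm (q2 - y))\<^sup>2) / 2 - (norm (q1 - q2))\<^sup>2 / 4"
proof -
  have e: "(1/2) *\<^sub>R q1 + (1 - 1/2) *\<^sub>R q2 - y = (1/2) *\<^sub>R ((q1 - y) + (q2 - y))"
    by (simp add: algebra_simps scaleR_add_left[symmetric])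
  have e2: "q1 - q2 = (q1 - y) - (q2 - y)" by simp
  have n: "(norm ((1/2) *\<^sub>R ((q1 - y) + (q2 - y))))\<^sup>2 = (norm ((q1 - y) + (q2 - y)))\<^sup>2 / 4"
    by (simp add: power2_eq_square)
  show ?thesis unfolding e n using par0[of "q1 - y" "q2 - y"] unfolding e2[symmetric] by (simp add: field_simps)
qed

lemma min_unique:
  assumes m1: "\<forall>z. Phi y q1 \<le> Phi y z" and m2: "\<forall>z. Phi y q2 \<le> Phi y z"
  shows "q1 = q2"
proof -
  define a1 where "a1 = real_of_ereal (h q1)"
  define a2 where "a2 = real_of_ereal (h q2)"
  have h1: "h q1 = ereal a1" using min_finite[OF m1] a1_def by simp
  have h2: "h q2 = ereal a2" using min_finite[OF m2] a2_def by simp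
  define n1 where "n1 = (norm (q1 - y))\<^sup>2 / (2 * \<gamma>)"
  define n2 where "n2 = (norm (q2 - y))\<^sup>2 / (2 * \<gamma>)"
  have eq: "a1 + n1 \<le> a2 + n2" "a2 + n2 \<le> a1 + n1"
    using m1[rule_format, of q2] m2[rule_format, of q1] by (auto simp: Phi_def h1 h2 n1_def n2_def)
  define c where "c = (1/2) *\<^sub>R q1 + (1 - 1/2) *\<^sub>R q2"
  have "h c \<le> ereal (1/2) * h q1 + ereal (1 - 1/2) * h q2"
    using convh[unfolded convex_fun_def, rule_format, of "1/2" q1 q2] unfolding c_def by simp
  hence hc: "h c \<le> ereal (a1/2 + a2/2)" by (simp add: h1 h2)
  have "Phi y q1 \<le> Phi y c" using m1 by blast
  hence "ereal (a1 + n1) \<le> h c + ereal ((norm (c - y))\<^sup>2 / (2 * \<gamma>))" by (simp add: Phi_def h1 n1_def)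
  also have "\<dots> \<le> ereal (a1/2 + a2/2) + ereal ((norm (c - y))\<^sup>2 / (2 * \<gamma>))" using hc by (intro add_mono) auto
  finally have "a1 + n1 \<le> a1/2 + a2/2 + (norm (c - y))\<^sup>2 / (2 * \<gamma>)" by simp
  also have "(norm (c - y))\<^sup>2 / (2 * \<gamma>) = (n1 + n2) / 2 - (norm (q1 - q2))\<^sup>2 / (8 * \<gamma>)"
    unfolding c_def parallelogram n1_def n2_def using gpos by (simp add: field_simps)
  finally have fin: "a1 + n1 \<le> a1 / 2 + a2 / 2 + ((n1 + n2) / 2 - (norm (q1 - q2))\<^sup>2 / (8 * \<gamma>))" .
  define X where "X = (norm (q1 - q2))\<^sup>2 / (8 * \<gamma>)"
  have "X \<le> 0" using fin eq unfolding X_def[symmetric] by (simp add: field_simps)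
  hence "(norm (q1 - q2))\<^sup>2 / (8 * \<gamma>) \<le> 0" unfolding X_def .
  hence "(norm (q1 - q2))\<^sup>2 \<le> 0" using gpos by (simp add: divide_le_0_iff)
  thus ?thesis by simp
qed

lemma min_subgrad:
  assumes m: "\<forall>z. Phi y q \<le> Phi y z"
  shows "h z \<ge> ereal (real_of_ereal (h q) + (y - q) \<bullet> (z - q) / \<gamma>)"
proof (cases rule: finite_cases[of z])
  case (1 az)
  define aq where "aq = real_of_ereal (h q)"
  have hq: "h q = ereal aq" using min_finite[OF m] aq_def by simp
  have "aq \<le> az + (q - y) \<bullet> (z - q) / \<gamma> + t * ((norm (z - q))\<^sup>2 / (2 * \<gamma>))" if t: "0 < t" "t \<le> 1" for t
  proof -
    define zt where "zt = t *\<^sub>R z + (1 - t) *\<^sub>R q"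
    have "h zt \<le> ereal t * h z + ereal (1 - t) * h q" using convh t unfolding convex_fun_def zt_def by auto
    hence hzt: "h zt \<le> ereal (t * az + (1 - t) * aq)" by (simp add: 1 hq)
    have "Phi y q \<le> Phi y zt" using m by blast
    hence "ereal (aq + (norm (q - y))\<^sup>2 / (2 * \<gamma>)) \<le> h zt + ereal ((norm (zt - y))\<^sup>2 / (2 * \<gamma>))" by (simp add: Phi_def hq)
    also have "\<dots> \<le> ereal (t * az + (1 - t) * aq) + ereal ((norm (zt - y))\<^sup>2 / (2 * \<gamma>))" using hzt by (intro add_mono) auto
    finally have ineq: "aq + (norm (q - y))\<^sup>2 / (2 * \<gamma>) \<le> t * az + (1 - t) * aq + (norm (zt - y))\<^sup>2 / (2 * \<gamma>)" by simp
    have "zt - y = (q - y) + t *\<^sub>R (z - q)" by (simp add: zt_def algebra_simps)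
    hence n: "(norm (zt - y))\<^sup>2 = (norm (q - y))\<^sup>2 + 2 * t * ((q - y) \<bullet> (z - q)) + t\<^sup>2 * (norm (z - q))\<^sup>2"
      by (simp only: power2_norm_eq_inner) (simp add: inner_add_left inner_add_right inner_commute algebra_simps power2_eq_square)
    have n': "(norm (zt - y))\<^sup>2 / (2 * \<gamma>) = (norm (q - y))\<^sup>2 / (2 * \<gamma>) + (2 * t * ((q - y) \<bullet> (z - q)) + t\<^sup>2 * (norm (z - q))\<^sup>2) / (2 * \<gamma>)"
      using gpos unfolding n by (simp add: field_simps)
    have "t * aq \<le> t * az + (2 * t * ((q - y) \<bullet> (z - q)) + t\<^sup>2 * (norm (z - q))\<^sup>2) / (2 * \<gamma>)"
      using ineq unfolding n' by (simp add: algebra_simps)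
    also have "\<dots> = t * (az + (q - y) \<bullet> (z - q) / \<gamma> + t * ((norm (z - q))\<^sup>2 / (2 * \<gamma>)))"
      using gpos by (simp add: field_simps power2_eq_square)
    finally show ?thesis using t by simp
  qed
  hence "aq \<le> az + (q - y) \<bullet> (z - q) / \<gamma>" by (rule limit_t)
  moreover have "(y - q) \<bullet> (z - q) = - ((q - y) \<bullet> (z - q))" by (simp add: inner_diff_left)
  ultimately show ?thesis using 1 aq_def by simp
qed simp

lemma prox_is_min: "\<forall>z. Phi y (prox h \<gamma> y) \<le> Phi y z"
proof -
  have "\<exists>!q. \<forall>z. Phi y q \<le> Phi y z" using exists_min min_unique by blast
  hence "\<forall>z. Phi y (THE q. \<forall>z. Phi y q \<le> Phi y z) \<le> Phi y z" by (rule theI')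
  thus ?thesis unfolding prox_def Phi_def .
qed

end

lemma nonexp:
  fixes q1 q2 u v :: "'a::real_inner"
  assumes g: "\<gamma> > 0"
    and s1: "a2 \<ge> a1 + (u - q1) \<bullet> (q2 - q1) / \<gamma>"
    and s2: "a1 \<ge> a2 + (v - q2) \<bullet> (q1 - q2) / \<gamma>"
  shows "norm (q1 - q2) \<le> norm (u - v)"
proof -
  have "0 \<ge> ((u - q1) \<bullet> (q2 - q1) + (v - q2) \<bullet> (q1 - q2)) / \<gamma>" using s1 s2 by (simp add: add_divide_distrib)
  hence "(u - q1) \<bullet> (q2 - q1) + (v - q2) \<bullet> (q1 - q2) \<le> 0" using g by (simp add: divide_le_0_iff)
  moreover have "(u - q1) \<bullet> (q2 - q1) + (v - q2) \<bullet> (q1 - q2) = (norm (q1 - q2))\<^sup>2 - (u - v) \<bullet> (q1 - q2)"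
    by (simp only: power2_norm_eq_inner) (simp add: inner_diff_left inner_diff_right inner_commute algebra_simps)
  ultimately have "(norm (q1 - q2))\<^sup>2 \<le> (u - v) \<bullet> (q1 - q2)" by simp
  also have "\<dots> \<le> norm (u - v) * norm (q1 - q2)" by (rule norm_cauchy_schwarz)
  finally have "norm (q1 - q2) * norm (q1 - q2) \<le> norm (u - v) * norm (q1 - q2)" by (simp add: power2_eq_square)
  thus ?thesis by (cases "norm (q1 - q2) = 0") (auto simp: mult_le_cancel_right)
qed

lemma sumsq:
  fixes c :: "'a::real_inner" and w :: "nat \<Rightarrow> 'a"
  shows "(\<Sum>j\<in>I. (norm (c + w j))\<^sup>2) = real (card I) * (norm c)\<^sup>2 + 2 * (c \<bullet> sum w I) + (\<Sum>j\<in>I. (norm (w j))\<^sup>2)"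
proof -
  have "(norm (c + w j))\<^sup>2 = (norm c)\<^sup>2 + 2 * (c \<bullet> w j) + (norm (w j))\<^sup>2" for j
    by (simp only: power2_norm_eq_inner) (simp add: inner_add_left inner_add_right inner_commute)
  hence "(\<Sum>j\<in>I. (norm (c + w j))\<^sup>2) = (\<Sum>j\<in>I. (norm c)\<^sup>2 + 2 * (c \<bullet> w j) + (norm (w j))\<^sup>2)" by simp
  also have "\<dots> = real (card I) * (norm c)\<^sup>2 + 2 * (c \<bullet> sum w I) + (\<Sum>j\<in>I. (norm (w j))\<^sup>2)"
    by (simp add: sum.distrib sum_distrib_left inner_sum_right)
  finally show ?thesis .
qed

lemma sum_mean:
  fixes Z :: "nat \<Rightarrow> 'a::real_vector"
  assumes "n > 0"
  shows "sum Z {..<n} = real n *\<^sub>R ((1 / real n) *\<^sub>R sum Z {..<n})"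
  using assms by simp

lemma centered:
  fixes Z :: "nat \<Rightarrow> 'a::real_inner"
  assumes n: "n > 0"
  defines "Zb \<equiv> (1 / real n) *\<^sub>R sum Z {..<n}"
  shows "(\<Sum>j<n. (norm (Z j - Zb))\<^sup>2) = (\<Sum>j<n. (norm (Z j))\<^sup>2) - real n * (norm Zb)\<^sup>2"
proof -
  have "(\<Sum>j<n. (norm (Z j - Zb))\<^sup>2) = (\<Sum>j<n. (norm (- Zb + Z j))\<^sup>2)" by simp
  also have "\<dots> = real n * (norm Zb)\<^sup>2 + 2 * ((- Zb) \<bullet> sum Z {..<n}) + (\<Sum>j<n. (norm (Z j))\<^sup>2)"
    using sumsq[of "- Zb" Z "{..<n}"] by simp
  also have "(- Zb) \<bullet> sum Z {..<n} = - (real n * (norm Zb)\<^sup>2)"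
    using sum_mean[OF n, of Z] unfolding Zb_def[symmetric] 
    by (metis inner_minus_left inner_scaleR_right power2_norm_eq_inner)
  finally show ?thesis by simp
qed

lemma young:
  fixes a b :: "'a::real_inner"
  assumes "\<beta> > 0"
  shows "(norm (a - b))\<^sup>2 \<le> (1 + \<beta>) * (norm a)\<^sup>2 + (1 + 1/\<beta>) * (norm b)\<^sup>2"
proof -
  have "0 \<le> (norm (\<beta> *\<^sub>R a + b))\<^sup>2" by simp
  also have "\<dots> = \<beta>\<^sup>2 * (norm a)\<^sup>2 + 2 * \<beta> * (a \<bullet> b) + (norm b)\<^sup>2"
    by (simp only: power2_norm_eq_inner) (simp add: inner_add_left inner_add_right inner_commute power2_eq_square algebra_simps)
  finally have "0 \<le> (\<beta>\<^sup>2 * (norm a)\<^sup>2 + 2 * \<beta> * (a \<bullet> b) + (norm b)\<^sup>2) / \<beta>" using assms by simp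
  also have "\<dots> = \<beta> * (norm a)\<^sup>2 + 2 * (a \<bullet> b) + (1/\<beta>) * (norm b)\<^sup>2"
    using assms by (simp add: field_simps power2_eq_square)
  finally have 1: "0 \<le> \<beta> * (norm a)\<^sup>2 + 2 * (a \<bullet> b) + (1/\<beta>) * (norm b)\<^sup>2" .
  have 2: "(norm (a - b))\<^sup>2 = (norm a)\<^sup>2 - 2 * (a \<bullet> b) + (norm b)\<^sup>2"
    by (simp only: power2_norm_eq_inner) (simp add: inner_diff_left inner_diff_right inner_commute)
  show ?thesis using 1 unfolding 2 by (simp add: algebra_simps)
qed

lemma variance:
  fixes Y X :: "nat \<Rightarrow> 'a::real_inner"
  assumes n: "n > 0" and b: "\<beta> > 0"
  defines "Xb \<equiv> (1 / real n) *\<^sub>R sum X {..<n}" and "Yb \<equiv> (1 / real n) *\<^sub>R sum Y {..<n}"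
  shows "(\<Sum>j<n. (norm (Y j - X j + Xb))\<^sup>2) \<le> (1 + \<beta>) * (\<Sum>j<n. (norm (Y j))\<^sup>2) - real n * \<beta> * (norm Yb)\<^sup>2 + (1 + 1/\<beta>) * (\<Sum>j<n. (norm (X j))\<^sup>2)"
proof -
  define w where "w j = (Y j - Yb) - (X j - Xb)" for j
  have e: "Y j - X j + Xb = Yb + w j" for j by (simp add: w_def algebra_simps)
  have sw: "sum w {..<n} = 0"
    using sum_mean[OF n, of X] sum_mean[OF n, of Y] unfolding w_def Xb_def[symmetric] Yb_def[symmetric]
    by (simp add: sum_subtractf sum_constant_scaleR)
  have "(\<Sum>j<n. (norm (Y j - X j + Xb))\<^sup>2) = real n * (norm Yb)\<^sup>2 + (\<Sum>j<n. (norm (w j))\<^sup>2)"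
    unfolding e using sumsq[of Yb w "{..<n}"] sw by simp
  also have "(\<Sum>j<n. (norm (w j))\<^sup>2) \<le> (\<Sum>j<n. (1 + \<beta>) * (norm (Y j - Yb))\<^sup>2 + (1 + 1/\<beta>) * (norm (X j - Xb))\<^sup>2)"
    unfolding w_def by (intro sum_mono young b)
  also have "\<dots> = (1 + \<beta>) * ((\<Sum>j<n. (norm (Y j))\<^sup>2) - real n * (norm Yb)\<^sup>2) + (1 + 1/\<beta>) * ((\<Sum>j<n. (norm (X j))\<^sup>2) - real n * (norm Xb)\<^sup>2)"
    using centered[OF n, of X] centered[OF n, of Y] unfolding Xb_def[symmetric] Yb_def[symmetric]
    by (simp add: sum.distrib sum_distrib_left[symmetric])
  also have "\<dots> \<le> (1 + \<beta>) * ((\<Sum>j<n. (norm (Y j))\<^sup>2) - real n * (norm Yb)\<^sup>2) + (1 + 1/\<beta>) * (\<Sum>j<n. (norm (X j))\<^sup>2)"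
    using b by (intro add_left_mono mult_left_mono) auto
  finally show ?thesis by (simp add: algebra_simps)
qed

lemma param_facts:
  fixes \<mu> L N :: real
  assumes mu: "\<mu> > 0" and Lmu: "L \<ge> \<mu>" and N: "N \<ge> 1"
  defines "s \<equiv> \<mu> * N + L"
  defines "\<gamma> \<equiv> 1 / (2 * s)"
  defines "\<beta> \<equiv> (2 * \<mu> * N + L) / L"
  defines "c \<equiv> 1 / (2 * \<gamma> * (1 - \<gamma> * \<mu>) * N)"
  shows "c * \<gamma>\<^sup>2 * (1 + \<beta>) = c * \<gamma> / L"
    and "c * \<gamma> / L * (2 * (L - \<mu>)) + c * \<gamma>\<^sup>2 * \<beta> * (2 * \<mu>) = 1 / N"
    and "c * \<gamma>\<^sup>2 * (1 + 1/\<beta>) * (2 * L) \<le> 1 / N - \<gamma> * \<mu>"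
    and "c > 0" "\<gamma> > 0" "\<beta> > 0" "1 - \<gamma> * \<mu> > 0" "1 / c \<le> N / s"
proof -
  define a where "a = \<mu> * N"
  have a: "a \<ge> \<mu>" using N mu by (simp add: a_def)
  have L0: "L > 0" using mu Lmu by simp
  have s0: "s > 0" using a L0 mu unfolding s_def a_def[symmetric] by simp
  have sa: "s = a + L" by (simp add: s_def a_def)
  have g: "\<gamma> = 1 / (2 * s)" by (simp add: \<gamma>_def)
  show gpos: "\<gamma> > 0" using s0 by (simp add: g)
  have gm: "1 - \<gamma> * \<mu> = (2 * s - \<mu>) / (2 * s)" using s0 by (simp add: g field_simps)
  have sm: "2 * s - \<mu> > 0" using sa a L0 mu by simp
  show gm0: "1 - \<gamma> * \<mu> > 0" unfolding gm using sm s0 by simp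
  have c: "c = 2 * s\<^sup>2 / ((2 * s - \<mu>) * N)"
    unfolding c_def gm g using s0 sm N by (simp add: field_simps power2_eq_square)
  show cpos: "c > 0" unfolding c using s0 sm N by simp
  have b: "\<beta> = (2 * a + L) / L" by (simp add: \<beta>_def a_def)
  show "\<beta> > 0" unfolding b using a mu L0 by simp
  have b1: "1 + \<beta> = 2 * s / L" unfolding b sa using L0 by (simp add: field_simps)
  show "c * \<gamma>\<^sup>2 * (1 + \<beta>) = c * \<gamma> / L"
    unfolding b1 g using s0 L0 by (simp add: field_simps power2_eq_square)
  have key: "2 * s * (L - \<mu>) + \<mu> * (2 * a + L) = L * (2 * s - \<mu>)" by (simp add: sa algebra_simps)
  have "(L - \<mu>) / L + \<gamma> * \<beta> * \<mu> = (2 * s * (L - \<mu>) + \<mu> * (2 * a + L)) / (2 * s * L)"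
    unfolding g b using s0 L0 by (simp add: field_simps)
  also have "\<dots> = (2 * s - \<mu>) / (2 * s)" unfolding key using L0 by simp
  also have "\<dots> = 1 - \<gamma> * \<mu>" using gm by simp
  finally have "(L - \<mu>) / L + \<gamma> * \<beta> * \<mu> = 1 - \<gamma> * \<mu>" .
  note kk = this
  have "c * \<gamma> / L * (2 * (L - \<mu>)) + c * \<gamma>\<^sup>2 * \<beta> * (2 * \<mu>) = 2 * c * \<gamma> * ((L - \<mu>) / L + \<gamma> * \<beta> * \<mu>)"
    using L0 by (simp add: power2_eq_square field_simps)
  also have "\<dots> = 2 * c * \<gamma> * (1 - \<gamma> * \<mu>)" unfolding kk ..
  also have "\<dots> = 1 / N" unfolding c_def using gpos gm0 N by (simp add: field_simps)
  finally show "c * \<gamma> / L * (2 * (L - \<mu>)) + c * \<gamma>\<^sup>2 * \<beta> * (2 * \<mu>) = 1 / N" .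
  have b2: "1 + 1/\<beta> = 2 * s / (2 * a + L)" unfolding b sa using L0 a mu by (simp add: field_simps)
  have lhs: "c * \<gamma>\<^sup>2 * (1 + 1/\<beta>) * (2 * L) = 2 * s * L / ((2 * s - \<mu>) * N * (2 * a + L))"
  proof -
    have gen: "(2 * s\<^sup>2 / (P * N)) * (1 / (2 * s))\<^sup>2 * (2 * s / Q) * (2 * L) = 2 * s * L / (P * N * Q)"
      if "P > 0" "Q > 0" for P Q
      using that s0 N by (simp add: field_simps power2_eq_square)
    show ?thesis unfolding b2 c g using gen[of "2 * s - \<mu>" "2 * a + L"] sm a mu L0 by simp
  qed
  have rhs: "1 / N - \<gamma> * \<mu> = (a + 2 * L) / (2 * s * N)"
    unfolding g sa using s0 N by (simp add: field_simps a_def sa)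
  have poly: "4 * s\<^sup>2 * L \<le> (2 * s - \<mu>) * (2 * a + L) * (a + 2 * L)"
  proof -
    have "(a + 2 * L) * (2 * a + L) * (a + 2 * L) \<le> (2 * s - \<mu>) * (2 * a + L) * (a + 2 * L)"
      using sa a mu L0 by (intro mult_right_mono) auto
    moreover have "(a + 2 * L) * (2 * a + L) * (a + 2 * L) - 4 * s\<^sup>2 * L = 2 * a^3 + 5 * a\<^sup>2 * L + 4 * a * L\<^sup>2"
      unfolding sa by (simp add: algebra_simps power2_eq_square power3_eq_cube)
    moreover have "2 * a^3 + 5 * a\<^sup>2 * L + 4 * a * L\<^sup>2 \<ge> 0" using a mu L0 by simp
    ultimately show ?thesis by linarith
  qed
  show "c * \<gamma>\<^sup>2 * (1 + 1/\<beta>) * (2 * L) \<le> 1 / N - \<gamma> * \<mu>"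
  proof -
    have gen2: "2 * s * L / (P * N * Q) \<le> R / (2 * s * N)"
      if P: "P > 0" and Q: "Q > 0" and le: "4 * s\<^sup>2 * L \<le> P * Q * R" for P Q R
    proof -
      have "2 * s * L / (P * N * Q) = (4 * s\<^sup>2 * L) / (P * Q * (2 * s * N))"
        using P Q s0 N by (simp add: field_simps power2_eq_square)
      also have "\<dots> \<le> (P * Q * R) / (P * Q * (2 * s * N))"
        using le P Q s0 N by (intro divide_right_mono) auto
      also have "\<dots> = R / (2 * s * N)" using P Q by simp
      finally show ?thesis .
    qed
    show ?thesis unfolding lhs rhs using gen2[OF sm _ poly] a mu L0 by simp
  qed
  have "1 / c = (2 * s - \<mu>) * N / (2 * s\<^sup>2)" unfolding c by simp
  also have "\<dots> \<le> (2 * s) * N / (2 * s\<^sup>2)" using mu N s0 by (intro divide_right_mono mult_right_mono) auto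
  also have "\<dots> = N / s" using s0 by (simp add: power2_eq_square)
  finally show "1 / c \<le> N / s" .
qed

lemma scalar_comb:
  fixes \<mu> L N \<gamma> \<beta> c SE d SYc SY2 G SX2 SD SP :: real
  assumes N: "N \<ge> 1"
    and id1: "c * \<gamma>\<^sup>2 * (1 + \<beta>) = c * \<gamma> / L"
    and id2: "c * \<gamma> / L * (2 * (L - \<mu>)) + c * \<gamma>\<^sup>2 * \<beta> * (2 * \<mu>) = 1 / N"
    and in3: "c * \<gamma>\<^sup>2 * (1 + 1/\<beta>) * (2 * L) \<le> 1 / N - \<gamma> * \<mu>"
    and cpos: "c > 0" and gpos: "\<gamma> > 0" and bpos: "\<beta> > 0" and L0: "L > 0"
    and SE: "SE \<le> N * d - 2 * \<gamma> * SYc + \<gamma>\<^sup>2 * ((1 + \<beta>) * SY2 - N * \<beta> * G + (1 + 1/\<beta>) * SX2)"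
    and K: "2 * L * SYc \<ge> 2 * (L - \<mu>) * SD + N * \<mu> * L * d + SY2"
    and B: "SX2 \<le> 2 * L * SP"
    and PL: "2 * \<mu> * SD \<le> N * G"
    and SD0: "SD \<ge> 0" and SP0: "SP \<ge> 0"
  shows "(N * SP - SP + SD) / N + c * SE \<le> (1 - \<gamma> * \<mu>) * (SP + N * c * d)"
proof -
  define k1 where "k1 = c * \<gamma> / L"
  define k2 where "k2 = c * \<gamma>\<^sup>2 * \<beta>"
  define k3 where "k3 = c * \<gamma>\<^sup>2 * (1 + 1/\<beta>)"
  have k1: "k1 \<ge> 0" "k2 \<ge> 0" "k3 \<ge> 0" using cpos gpos bpos L0 by (auto simp: k1_def k2_def k3_def)
  have A: "c * SE \<le> c * (N * d - 2 * \<gamma> * SYc + \<gamma>\<^sup>2 * ((1 + \<beta>) * SY2 - N * \<beta> * G + (1 + 1/\<beta>) * SX2))"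
    using SE cpos by (intro mult_left_mono) auto
  have A2: "c * (N * d - 2 * \<gamma> * SYc + \<gamma>\<^sup>2 * ((1 + \<beta>) * SY2 - N * \<beta> * G + (1 + 1/\<beta>) * SX2))
     = c * N * d - 2 * (c * \<gamma>) * SYc + (c * \<gamma>\<^sup>2 * (1 + \<beta>)) * SY2 - k2 * (N * G) + k3 * SX2"
    by (simp add: k2_def k3_def algebra_simps)
  have Bk: "k1 * (2 * (L - \<mu>) * SD + N * \<mu> * L * d + SY2) \<le> k1 * (2 * L * SYc)"
    using K k1 by (intro mult_left_mono) auto
  have B1: "k1 * (2 * L * SYc) = 2 * (c * \<gamma>) * SYc" using L0 by (simp add: k1_def)
  have B2: "k1 * (2 * (L - \<mu>) * SD + N * \<mu> * L * d + SY2) = (k1 * (2 * (L - \<mu>))) * SD + (c * \<gamma> * \<mu>) * (N * d) + k1 * SY2"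
    using L0 by (simp add: k1_def algebra_simps)
  have C: "k2 * (2 * \<mu> * SD) \<le> k2 * (N * G)" using PL k1 by (intro mult_left_mono) auto
  have D: "k3 * SX2 \<le> k3 * (2 * L * SP)" using B k1 by (intro mult_left_mono) auto
  have id2': "(k1 * (2 * (L - \<mu>))) * SD + k2 * (2 * \<mu> * SD) = SD / N"
    using arg_cong[OF id2, of "\<lambda>u. u * SD"] unfolding k1_def k2_def by (simp add: algebra_simps)
  have in3': "k3 * (2 * L * SP) \<le> SP / N - (\<gamma> * \<mu>) * SP"
    using mult_right_mono[OF in3 SP0] unfolding k3_def by (simp add: algebra_simps)
  have id1': "(c * \<gamma>\<^sup>2 * (1 + \<beta>)) * SY2 = k1 * SY2" using id1 by (simp add: k1_def)
  have lhs: "(N * SP - SP + SD) / N = SP - SP / N + SD / N" using N by (simp add: field_simps)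
  have rhs: "(1 - \<gamma> * \<mu>) * (SP + N * c * d) = SP - (\<gamma> * \<mu>) * SP + c * N * d - (c * \<gamma> * \<mu>) * (N * d)"
    by (simp add: algebra_simps)
  define u where "u = SP / N"
  define v where "v = SD / N"
  show ?thesis unfolding lhs rhs u_def[symmetric] v_def[symmetric]
    using A A2 Bk B1 B2 C D id2' in3' id1' unfolding u_def[symmetric] v_def[symmetric] by linarith
qed

lemma index_seqs_Suc:
  "index_seqs n (Suc k) = (\<lambda>(js, j). js @ [j]) ` (index_seqs n k \<times> {..<n})"
proof (intro equalityI subsetI)
  fix xs assume "xs \<in> index_seqs n (Suc k)"
  hence xs: "length xs = Suc k" "set xs \<subseteq> {..<n}" by (auto simp: index_seqs_def)
  then obtain ys y where "xs = ys @ [y]" by (metis length_Suc_conv_rev)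
  thus "xs \<in> (\<lambda>(js, j). js @ [j]) ` (index_seqs n k \<times> {..<n})"
    using xs by (auto simp: index_seqs_def intro!: image_eqI[of _ _ "(ys, y)"])
qed (auto simp: index_seqs_def)

lemma finite_index_seqs: "finite (index_seqs n k)"
proof -
  have "index_seqs n k = {xs. set xs \<subseteq> {..<n} \<and> length xs = k}" by (auto simp: index_seqs_def)
  thus ?thesis using finite_lists_length_eq[of "{..<n}" k] by simp
qed

lemma sum_index_seqs_Suc:
  "(\<Sum>js\<in>index_seqs n (Suc k). X js) = (\<Sum>js\<in>index_seqs n k. \<Sum>j<n. X (js @ [j]))"
proof -
  have inj: "inj_on (\<lambda>(js, j). js @ [j]) (index_seqs n k \<times> {..<n})"
    by (auto simp: inj_on_def)
  have "(\<Sum>js\<in>index_seqs n (Suc k). X js) = (\<Sum>q\<in>index_seqs n k \<times> {..<n}. X ((\<lambda>(js, j). js @ [j]) q))"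
    unfolding index_seqs_Suc by (rule sum.reindex[OF inj, unfolded o_def])
  also have "\<dots> = (\<Sum>js\<in>index_seqs n k. \<Sum>j<n. X (js @ [j]))"
    using sum.cartesian_product[of "\<lambda>js j. X (js @ [j])" "{..<n}" "index_seqs n k"]
    by (simp add: case_prod_beta split_def)
  finally show ?thesis .
qed

lemma saga_run_snoc: "saga_run n g h \<gamma> x0 (js @ [j]) = saga_step n g h \<gamma> (saga_run n g h \<gamma> x0 js) j"
  by (simp add: saga_run_def)

lemma expect_iter:
  assumes n: "n > 0" and rho: "\<rho> \<ge> 0"
    and step: "\<And>st. (\<Sum>j<n. T (saga_step n g h \<gamma> st j)) \<le> real n * \<rho> * T st"
  shows "expect_seq n k (\<lambda>js. T (saga_run n g h \<gamma> x0 js)) \<le> \<rho> ^ k * T (x0, \<lambda>_. x0)"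
proof (induction k)
  case 0
  have "index_seqs n 0 = {[]}" by (auto simp: index_seqs_def)
  thus ?case by (simp add: expect_seq_def saga_run_def)
next
  case (Suc k)
  define S where "S = (\<Sum>js\<in>index_seqs n k. T (saga_run n g h \<gamma> x0 js))"
  have "(\<Sum>js\<in>index_seqs n (Suc k). T (saga_run n g h \<gamma> x0 js))
      = (\<Sum>js\<in>index_seqs n k. \<Sum>j<n. T (saga_step n g h \<gamma> (saga_run n g h \<gamma> x0 js) j))"
    unfolding sum_index_seqs_Suc saga_run_snoc ..
  also have "\<dots> \<le> (\<Sum>js\<in>index_seqs n k. real n * \<rho> * T (saga_run n g h \<gamma> x0 js))"
    by (intro sum_mono step)
  also have "\<dots> = real n * \<rho> * S" by (simp add: S_def sum_distrib_left)
  finally have le: "(\<Sum>js\<in>index_seqs n (Suc k). T (saga_run n g h \<gamma> x0 js)) \<le> real n * \<rho> * S" .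
  have "expect_seq n (Suc k) (\<lambda>js. T (saga_run n g h \<gamma> x0 js)) \<le> real n * \<rho> * S / real n ^ Suc k"
    unfolding expect_seq_def using le n by (intro divide_right_mono) auto
  also have "\<dots> = \<rho> * (S / real n ^ k)" using n by (simp add: field_simps)
  also have "S / real n ^ k = expect_seq n k (\<lambda>js. T (saga_run n g h \<gamma> x0 js))" by (simp add: expect_seq_def S_def)
  also have "\<rho> * \<dots> \<le> \<rho> * (\<rho> ^ k * T (x0, \<lambda>_. x0))" using Suc.IH rho by (intro mult_left_mono)
  finally show ?case by simp
qed

lemma expect_mono:
  assumes "\<And>js. X js \<le> Y js"
  shows "expect_seq n k X \<le> expect_seq n k Y"
  unfolding expect_seq_def by (intro divide_right_mono sum_mono assms) auto

lemma expect_div: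
  "expect_seq n k (\<lambda>js. X js / c) = expect_seq n k X / c"
  unfolding expect_seq_def by (simp add: sum_divide_distrib[symmetric])

lemma K_form:
  fixes x y gx gy :: "'a::real_inner" and Fx Fy L \<mu> :: real
  assumes "2 * (L - \<mu>) * (Fy - Fx - gx \<bullet> (y - x) - \<mu>/2 * (norm (y - x))\<^sup>2) \<ge> (norm (gy - gx - \<mu> *\<^sub>R (y - x)))\<^sup>2"
  shows "2 * L * ((gx - gy) \<bullet> (x - y)) \<ge> 2 * (L - \<mu>) * (Fx - Fy - gy \<bullet> (x - y)) + \<mu> * L * (norm (x - y))\<^sup>2 + (norm (gx - gy))\<^sup>2"
proof -
  define Yv where "Yv = gx - gy"
  define Dv where "Dv = x - y"
  have e1: "gy - gx - \<mu> *\<^sub>R (y - x) = \<mu> *\<^sub>R Dv - Yv" by (simp add: Yv_def Dv_def algebra_simps)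
  have e2: "gx \<bullet> (y - x) = - (Yv \<bullet> Dv) - gy \<bullet> Dv" by (simp add: Yv_def Dv_def inner_diff_left inner_diff_right)
  have e3: "norm (y - x) = norm Dv" by (simp add: Dv_def norm_minus_commute)
  have e4: "(norm (\<mu> *\<^sub>R Dv - Yv))\<^sup>2 = \<mu>\<^sup>2 * (norm Dv)\<^sup>2 - 2 * \<mu> * (Yv \<bullet> Dv) + (norm Yv)\<^sup>2"
    by (simp only: power2_norm_eq_inner) (simp add: inner_diff_left inner_diff_right inner_commute power2_eq_square algebra_simps)
  have "2 * (L - \<mu>) * (Fy - Fx - (- (Yv \<bullet> Dv) - gy \<bullet> Dv) - \<mu>/2 * (norm Dv)\<^sup>2) \<ge> \<mu>\<^sup>2 * (norm Dv)\<^sup>2 - 2 * \<mu> * (Yv \<bullet> Dv) + (norm Yv)\<^sup>2"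
    using assms unfolding e1 e2 e3 e4 by simp
  hence "2 * L * (Yv \<bullet> Dv) \<ge> 2 * (L - \<mu>) * (Fx - Fy - gy \<bullet> Dv) + \<mu> * L * (norm Dv)\<^sup>2 + (norm Yv)\<^sup>2"
    by (simp add: algebra_simps power2_eq_square diff_divide_distrib)
  thus ?thesis by (simp add: Yv_def Dv_def)
qed

lemma pl_form:
  fixes Yb Dv :: "'a::real_inner" and \<mu> :: real
  assumes "\<mu> > 0"
  shows "2 * \<mu> * (Yb \<bullet> Dv) \<le> (norm Yb)\<^sup>2 + \<mu>\<^sup>2 * (norm Dv)\<^sup>2"
proof -
  have "0 \<le> (norm (Yb - \<mu> *\<^sub>R Dv))\<^sup>2" by simp
  also have "\<dots> = (norm Yb)\<^sup>2 - 2 * \<mu> * (Yb \<bullet> Dv) + \<mu>\<^sup>2 * (norm Dv)\<^sup>2"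
    by (simp only: power2_norm_eq_inner) (simp add: inner_diff_left inner_diff_right inner_commute power2_eq_square algebra_simps)
  finally show ?thesis by simp
qed

theorem corollary1:
  fixes n :: nat and fs :: "nat \<Rightarrow> 'a::euclidean_space \<Rightarrow> real"
    and g :: "nat \<Rightarrow> 'a \<Rightarrow> 'a" and h :: "'a \<Rightarrow> ereal"
    and \<mu> L \<gamma> :: real and x0 xstar :: 'a and k :: nat
  defines "f \<equiv> (\<lambda>x. (1 / real n) * (\<Sum>i<n. fs i x))"
  defines "f' \<equiv> (\<lambda>x. (1 / real n) *\<^sub>R (\<Sum>i<n. g i x))"
  assumes n: "n \<ge> 1"
    and mu: "\<mu> > 0"
    and grad: "\<And>i x. i < n \<Longrightarrow> (fs i has_derivative (\<lambda>v. g i x \<bullet> v)) (at x)"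
    and lip: "\<And>i x y. i < n \<Longrightarrow> norm (g i x - g i y) \<le> L * norm (x - y)"
    and sc: "\<And>i. i < n \<Longrightarrow> strongly_convex \<mu> (fs i)"
    and h: "proper_fun h" "closed_fun h" "convex_fun h"
    and xstar: "\<And>x. ereal (f xstar) + h xstar \<le> ereal (f x) + h x"
    and gamma: "\<gamma> = 1 / (2 * (\<mu> * real n + L))"
  shows "expect_seq n k (\<lambda>js. (norm (fst (saga_run n g h \<gamma> x0 js) - xstar))\<^sup>2)
    \<le> (1 - \<mu> / (2 * (\<mu> * real n + L))) ^ k *
       ((norm (x0 - xstar))\<^sup>2
        + real n / (\<mu> * real n + L) * (f x0 - f' xstar \<bullet> (x0 - xstar) - f xstar))"
proof -
  have n0: "n > 0" using n by simp
  have N1: "real n \<ge> 1" using n by simp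
  define p where "p = f' xstar"
  have S: "fs i b \<ge> fs i a + g i a \<bullet> (b - a) + \<mu>/2 * (norm (b - a))\<^sup>2" if "i < n" for i a b
    by (rule sc_lower[where G="g i"]) (use sc grad that in auto)
  have Q: "fs i b \<le> fs i a + g i a \<bullet> (b - a) + L/2 * (norm (b - a))\<^sup>2" if "i < n" for i a b
    by (rule smooth_upper[where G="g i"]) (use lip grad that in auto)
  have Lmu: "\<mu> \<le> L"
    by (rule mu_le_L[where F="fs 0" and G="g 0"]) (use S Q n0 in auto)
  have L0: "L > 0" using Lmu mu by simp
  define \<beta> where "\<beta> = (2 * \<mu> * real n + L) / L"
  define c where "c = 1 / (2 * \<gamma> * (1 - \<gamma> * \<mu>) * real n)"
  note PF = param_facts[OF mu Lmu N1, folded gamma, folded \<beta>_def, folded c_def]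
  have gpos: "\<gamma> > 0" and cpos: "c > 0" and bpos: "\<beta> > 0" and gm0: "1 - \<gamma> * \<mu> > 0"
    using PF by auto
  have fup: "f b \<le> f a + f' a \<bullet> (b - a) + L/2 * (norm (b - a))\<^sup>2" for a b
  proof -
    have "(\<Sum>i<n. fs i b) \<le> (\<Sum>i<n. fs i a + g i a \<bullet> (b - a) + L/2 * (norm (b - a))\<^sup>2)"
      by (intro sum_mono Q) auto
    also have "\<dots> = (\<Sum>i<n. fs i a) + (\<Sum>i<n. g i a) \<bullet> (b - a) + real n * (L/2 * (norm (b - a))\<^sup>2)"
      by (simp add: sum.distrib inner_sum_left)
    finally have "(1 / real n) * (\<Sum>i<n. fs i b) \<le> (1 / real n) * ((\<Sum>i<n. fs i a) + (\<Sum>i<n. g i a) \<bullet> (b - a) + real n * (L/2 * (norm (b - a))\<^sup>2))"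
      using n0 by (intro mult_left_mono) auto
    also have "\<dots> = f a + f' a \<bullet> (b - a) + L/2 * (norm (b - a))\<^sup>2"
      using n0 by (simp add: f_def f'_def algebra_simps)
    finally show ?thesis by (simp add: f_def)
  qed
  obtain z1 where z1: "h z1 \<noteq> \<infinity>" using h(1) unfolding proper_fun_def by blast
  have hnm: "h z \<noteq> -\<infinity>" for z using h(1) unfolding proper_fun_def by blast
  obtain r1 where r1: "h z1 = ereal r1" using z1 hnm[of z1] by (cases "h z1") auto
  define hs where "hs = real_of_ereal (h xstar)"
  have hxs: "h xstar = ereal hs"
  proof -
    have "ereal (f xstar) + h xstar \<le> ereal (f z1) + ereal r1" using xstar[of z1] r1 by simp
    hence "h xstar \<noteq> \<infinity>" by auto
    thus ?thesis using hnm[of xstar] unfolding hs_def by (cases "h xstar") auto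
  qed
  have opt: "ereal (hs - p \<bullet> (z - xstar)) \<le> h z" for z
  proof (cases "h z")
    case (real hz)
    have "hs \<le> hz + p \<bullet> (z - xstar) + t * (L/2 * (norm (z - xstar))\<^sup>2)" if t: "0 < t" "t \<le> 1" for t
    proof -
      define zt where "zt = t *\<^sub>R z + (1 - t) *\<^sub>R xstar"
      have d: "zt - xstar = t *\<^sub>R (z - xstar)" by (simp add: zt_def algebra_simps)
      have "h zt \<le> ereal t * h z + ereal (1 - t) * h xstar" using h(3) t unfolding convex_fun_def zt_def by auto
      hence hzt: "h zt \<le> ereal (t * hz + (1 - t) * hs)" by (simp add: real hxs)
      have "ereal (f xstar) + ereal hs \<le> ereal (f zt) + h zt" using xstar[of zt] hxs by simp
      also have "\<dots> \<le> ereal (f zt) + ereal (t * hz + (1 - t) * hs)" using hzt by (intro add_mono) auto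
      finally have i1: "f xstar + hs \<le> f zt + (t * hz + (1 - t) * hs)" by simp
      have "f zt \<le> f xstar + p \<bullet> (zt - xstar) + L/2 * (norm (zt - xstar))\<^sup>2" using fup unfolding p_def by blast
      also have "\<dots> = f xstar + t * (p \<bullet> (z - xstar)) + t * (t * (L/2 * (norm (z - xstar))\<^sup>2))"
        unfolding d by (simp add: power_mult_distrib power2_eq_square)
      finally have "t * hs \<le> t * (hz + p \<bullet> (z - xstar) + t * (L/2 * (norm (z - xstar))\<^sup>2))"
        using i1 by (simp add: algebra_simps)
      thus ?thesis using t by simp
    qed
    hence "hs \<le> hz + p \<bullet> (z - xstar)" by (rule limit_t)
    thus ?thesis using real by simp
  qed (use hnm in auto)
  interpret P: proxsetup h "hs + p \<bullet> xstar" p xstar \<gamma>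
  proof
    fix z
    have eq: "hs + p \<bullet> xstar - p \<bullet> z = hs - p \<bullet> (z - xstar)" by (simp add: inner_diff_right)
    show "ereal (hs + p \<bullet> xstar - p \<bullet> z) \<le> h z" unfolding eq by (rule opt)
  qed (use h gpos hxs in auto)
  have prox_close: "norm (prox h \<gamma> y - xstar) \<le> norm (y - (xstar - \<gamma> *\<^sub>R p))" for y
  proof -
    define q where "q = prox h \<gamma> y"
    have m: "\<forall>z. P.Phi y q \<le> P.Phi y z" unfolding q_def by (rule P.prox_is_min)
    define aq where "aq = real_of_ereal (h q)"
    have hq: "h q = ereal aq" using P.min_finite[OF m] aq_def by simp
    have "h xstar \<ge> ereal (aq + (y - q) \<bullet> (xstar - q) / \<gamma>)" using P.min_subgrad[OF m] aq_def by simp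
    hence s1: "hs \<ge> aq + (y - q) \<bullet> (xstar - q) / \<gamma>" using hxs by simp
    have "ereal (hs - p \<bullet> (q - xstar)) \<le> h q" by (rule opt)
    hence "aq \<ge> hs - p \<bullet> (q - xstar)" using hq by simp
    moreover have "((xstar - \<gamma> *\<^sub>R p) - xstar) \<bullet> (q - xstar) / \<gamma> = - (p \<bullet> (q - xstar))"
      using gpos by simp
    ultimately have s2: "aq \<ge> hs + ((xstar - \<gamma> *\<^sub>R p) - xstar) \<bullet> (q - xstar) / \<gamma>" by simp
    show ?thesis using nonexp[OF gpos s1 s2] unfolding q_def .
  qed
  define D where "D i z = fs i z - fs i xstar - g i xstar \<bullet> (z - xstar)" for i z
  define T where "T st = (1 / real n) * (\<Sum>i<n. D i (snd st i)) + c * (norm (fst st - xstar))\<^sup>2" for st :: "'a \<times> (nat \<Rightarrow> 'a)"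
  define \<rho> where "\<rho> = 1 - \<gamma> * \<mu>"
  have D0: "D i z \<ge> 0" if "i < n" for i z
  proof -
    have "fs i z \<ge> fs i xstar + g i xstar \<bullet> (z - xstar) + \<mu>/2 * (norm (z - xstar))\<^sup>2" using S[OF that] .
    moreover have "\<mu>/2 * (norm (z - xstar))\<^sup>2 \<ge> 0" using mu by simp
    ultimately show ?thesis unfolding D_def by linarith
  qed
  have step: "(\<Sum>j<n. T (saga_step n g h \<gamma> st j)) \<le> real n * \<rho> * T st" for st
  proof -
    obtain x \<phi> where st: "st = (x, \<phi>)" by (cases st)
    define Dv where "Dv = x - xstar"
    define Y where "Y j = g j x - g j xstar" for j
    define X where "X j = g j (\<phi> j) - g j xstar" for j
    define Xb where "Xb = (1 / real n) *\<^sub>R sum X {..<n}"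
    define Yb where "Yb = (1 / real n) *\<^sub>R sum Y {..<n}"
    define V where "V j = Y j - X j + Xb" for j
    define SYc where "SYc = (\<Sum>j<n. Y j \<bullet> Dv)"
    define SY2 where "SY2 = (\<Sum>j<n. (norm (Y j))\<^sup>2)"
    define SX2 where "SX2 = (\<Sum>j<n. (norm (X j))\<^sup>2)"
    define SD where "SD = (\<Sum>j<n. D j x)"
    define SP where "SP = (\<Sum>j<n. D j (\<phi> j))"
    define d where "d = (norm Dv)\<^sup>2"
    define x' where "x' j = fst (saga_step n g h \<gamma> st j)" for j
    define SE where "SE = (\<Sum>j<n. (norm (x' j - xstar))\<^sup>2)"
    have Xb_eq: "Xb = (1 / real n) *\<^sub>R (\<Sum>i<n. g i (\<phi> i)) - p"
      unfolding Xb_def X_def p_def f'_def by (simp add: sum_subtractf scaleR_diff_right)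
    have x'_eq: "x' j - xstar = (x - \<gamma> *\<^sub>R (g j x - g j (\<phi> j) + (1 / real n) *\<^sub>R (\<Sum>i<n. g i (\<phi> i)))) - (xstar - \<gamma> *\<^sub>R p) + (prox h \<gamma> (x - \<gamma> *\<^sub>R (g j x - g j (\<phi> j) + (1 / real n) *\<^sub>R (\<Sum>i<n. g i (\<phi> i)))) - xstar) - ((x - \<gamma> *\<^sub>R (g j x - g j (\<phi> j) + (1 / real n) *\<^sub>R (\<Sum>i<n. g i (\<phi> i)))) - (xstar - \<gamma> *\<^sub>R p))" for j
      by (simp add: x'_def st saga_step_def Let_def)
    have close: "norm (x' j - xstar) \<le> norm (Dv - \<gamma> *\<^sub>R V j)" for j
    proof -
      define w where "w = x - \<gamma> *\<^sub>R (g j x - g j (\<phi> j) + (1 / real n) *\<^sub>R (\<Sum>i<n. g i (\<phi> i)))"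
      have "x' j = prox h \<gamma> w" by (simp add: x'_def st saga_step_def Let_def w_def)
      moreover have "w - (xstar - \<gamma> *\<^sub>R p) = Dv - \<gamma> *\<^sub>R V j"
        unfolding w_def V_def Xb_eq Y_def X_def Dv_def by (simp add: algebra_simps)
      ultimately show ?thesis using prox_close[of w] by simp
    qed
    have SE_le: "SE \<le> (\<Sum>j<n. (norm (Dv + (- \<gamma>) *\<^sub>R V j))\<^sup>2)"
      unfolding SE_def using close by (intro sum_mono power_mono) auto
    have sumV: "sum V {..<n} = sum Y {..<n}"
      using sum_mean[OF n0, of X] unfolding V_def Xb_def[symmetric]
      by (simp add: sum.distrib sum_subtractf sum_constant_scaleR)
    have "(\<Sum>j<n. (norm (Dv + (- \<gamma>) *\<^sub>R V j))\<^sup>2) = real n * d + 2 * (Dv \<bullet> (\<Sum>j<n. (- \<gamma>) *\<^sub>R V j)) + (\<Sum>j<n. (norm ((- \<gamma>) *\<^sub>R V j))\<^sup>2)"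
      using sumsq[of Dv "\<lambda>j. (- \<gamma>) *\<^sub>R V j" "{..<n}"] by (simp add: d_def)
    also have "Dv \<bullet> (\<Sum>j<n. (- \<gamma>) *\<^sub>R V j) = - \<gamma> * SYc"
      unfolding scaleR_sum_right[symmetric] sumV SYc_def by (simp add: inner_sum_left inner_sum_right inner_commute)
    also have "(\<Sum>j<n. (norm ((- \<gamma>) *\<^sub>R V j))\<^sup>2) = \<gamma>\<^sup>2 * (\<Sum>j<n. (norm (V j))\<^sup>2)"
      by (simp add: power_mult_distrib sum_distrib_left)
    finally have SE1: "SE \<le> real n * d - 2 * \<gamma> * SYc + \<gamma>\<^sup>2 * (\<Sum>j<n. (norm (V j))\<^sup>2)" using SE_le by simp
    have var: "(\<Sum>j<n. (norm (V j))\<^sup>2) \<le> (1 + \<beta>) * SY2 - real n * \<beta> * (norm Yb)\<^sup>2 + (1 + 1/\<beta>) * SX2"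
      unfolding V_def Xb_def Yb_def SY2_def SX2_def by (rule variance[OF n0 bpos])
    have SE2: "SE \<le> real n * d - 2 * \<gamma> * SYc + \<gamma>\<^sup>2 * ((1 + \<beta>) * SY2 - real n * \<beta> * (norm Yb)\<^sup>2 + (1 + 1/\<beta>) * SX2)"
      using SE1 mult_left_mono[OF var, of "\<gamma>\<^sup>2"] by simp
    have Kj: "2 * L * (Y j \<bullet> Dv) \<ge> 2 * (L - \<mu>) * D j x + \<mu> * L * d + (norm (Y j))\<^sup>2" if j: "j < n" for j
    proof -
      have "2 * (L - \<mu>) * (fs j xstar - fs j x - g j x \<bullet> (xstar - x) - \<mu>/2 * (norm (xstar - x))\<^sup>2) \<ge> (norm (g j xstar - g j x - \<mu> *\<^sub>R (xstar - x)))\<^sup>2"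
        by (rule cocoercive[where G="g j" and \<mu>=\<mu> and L=L and m=\<mu>]) (use S Q j Lmu in auto)
      from K_form[OF this] show ?thesis by (simp add: Y_def D_def Dv_def d_def)
    qed
    have K: "2 * L * SYc \<ge> 2 * (L - \<mu>) * SD + real n * \<mu> * L * d + SY2"
    proof -
      have "(\<Sum>j<n. 2 * (L - \<mu>) * D j x + \<mu> * L * d + (norm (Y j))\<^sup>2) \<le> (\<Sum>j<n. 2 * L * (Y j \<bullet> Dv))"
        by (intro sum_mono Kj) auto
      thus ?thesis by (simp add: SYc_def SD_def SY2_def sum.distrib sum_distrib_left)
    qed
    have Bj: "(norm (X j))\<^sup>2 \<le> 2 * L * D j (\<phi> j)" if j: "j < n" for j
    proof -
      have "2 * (L - 0) * (fs j (\<phi> j) - fs j xstar - g j xstar \<bullet> (\<phi> j - xstar) - 0/2 * (norm (\<phi> j - xstar))\<^sup>2) \<ge> (norm (g j (\<phi> j) - g j xstar - 0 *\<^sub>R (\<phi> j - xstar)))\<^sup>2"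
        by (rule cocoercive[where G="g j" and \<mu>=\<mu> and L=L and m=0]) (use S Q j Lmu mu in auto)
      thus ?thesis by (simp add: X_def D_def)
    qed
    have B: "SX2 \<le> 2 * L * SP"
    proof -
      have "SX2 \<le> (\<Sum>j<n. 2 * L * D j (\<phi> j))" unfolding SX2_def by (intro sum_mono Bj) auto
      thus ?thesis by (simp add: SP_def sum_distrib_left)
    qed
    have PLj: "D j x \<le> Y j \<bullet> Dv - \<mu>/2 * d" if j: "j < n" for j
    proof -
      have "fs j xstar \<ge> fs j x + g j x \<bullet> (xstar - x) + \<mu>/2 * (norm (xstar - x))\<^sup>2" using S[OF j] .
      moreover have "g j x \<bullet> (xstar - x) = - (g j x \<bullet> Dv)" by (simp add: Dv_def inner_diff_right)
      moreover have "(norm (xstar - x))\<^sup>2 = d" by (simp add: d_def Dv_def norm_minus_commute)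
      moreover have "Y j \<bullet> Dv = g j x \<bullet> Dv - g j xstar \<bullet> Dv" by (simp add: Y_def inner_diff_left)
      ultimately show ?thesis unfolding D_def Dv_def by simp
    qed
    have SDle: "SD \<le> SYc - real n * (\<mu>/2 * d)"
    proof -
      have "SD \<le> (\<Sum>j<n. Y j \<bullet> Dv - \<mu>/2 * d)" unfolding SD_def by (intro sum_mono PLj) auto
      thus ?thesis by (simp add: SYc_def sum_subtractf)
    qed
    have SYc_eq: "SYc = real n * (Yb \<bullet> Dv)"
      using sum_mean[OF n0, of Y] unfolding SYc_def Yb_def[symmetric]
      by (metis inner_scaleR_left inner_sum_left)
    have PL: "2 * \<mu> * SD \<le> real n * (norm Yb)\<^sup>2"
    proof -
      have "2 * \<mu> * SD \<le> 2 * \<mu> * (SYc - real n * (\<mu>/2 * d))" using SDle mu by (intro mult_left_mono) auto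
      also have "\<dots> = real n * (2 * \<mu> * (Yb \<bullet> Dv) - \<mu>\<^sup>2 * d)" unfolding SYc_eq by (simp add: algebra_simps power2_eq_square)
      also have "\<dots> \<le> real n * (norm Yb)\<^sup>2"
        using pl_form[OF mu, of Yb Dv] by (intro mult_left_mono) (auto simp: d_def)
      finally show ?thesis .
    qed
    have SD0: "SD \<ge> 0" unfolding SD_def by (intro sum_nonneg D0) auto
    have SP0: "SP \<ge> 0" unfolding SP_def by (intro sum_nonneg D0) auto
    have comb: "(real n * SP - SP + SD) / real n + c * SE \<le> (1 - \<gamma> * \<mu>) * (SP + real n * c * d)"
      by (rule scalar_comb[OF N1 PF(1) PF(2) PF(3) cpos gpos bpos L0 SE2 K B PL SD0 SP0])
    have upd: "(\<Sum>i<n. D i ((\<phi>(j := x)) i)) = SP - D j (\<phi> j) + D j x" if j: "j < n" for j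
    proof -
      have "(\<Sum>i<n. D i ((\<phi>(j := x)) i)) = D j x + (\<Sum>i\<in>{..<n} - {j}. D i ((\<phi>(j := x)) i))"
        using j by (subst sum.remove[of _ j]) auto
      also have "(\<Sum>i\<in>{..<n} - {j}. D i ((\<phi>(j := x)) i)) = (\<Sum>i\<in>{..<n} - {j}. D i (\<phi> i))"
        by (intro sum.cong) auto
      also have "SP = D j (\<phi> j) + (\<Sum>i\<in>{..<n} - {j}. D i (\<phi> i))"
        unfolding SP_def using j by (subst sum.remove[of _ j]) auto
      ultimately show ?thesis by simp
    qed
    have Tj: "T (saga_step n g h \<gamma> st j) = (1 / real n) * (SP - D j (\<phi> j) + D j x) + c * (norm (x' j - xstar))\<^sup>2" if "j < n" for j
      using upd[OF that] by (simp add: T_def x'_def st saga_step_def Let_def)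
    have sumeq: "(\<Sum>j<n. SP - D j (\<phi> j) + D j x) = real n * SP - SP + SD"
    proof -
      have "(\<Sum>j<n. SP - D j (\<phi> j) + D j x) = (\<Sum>j<n. SP) - (\<Sum>j<n. D j (\<phi> j)) + (\<Sum>j<n. D j x)"
        by (simp add: sum.distrib sum_subtractf)
      thus ?thesis unfolding SP_def[symmetric] SD_def[symmetric] by simp
    qed
    have "(\<Sum>j<n. T (saga_step n g h \<gamma> st j)) = (\<Sum>j<n. (1 / real n) * (SP - D j (\<phi> j) + D j x) + c * (norm (x' j - xstar))\<^sup>2)"
      by (intro sum.cong) (auto simp: Tj)
    also have "\<dots> = (\<Sum>j<n. (1 / real n) * (SP - D j (\<phi> j) + D j x)) + (\<Sum>j<n. c * (norm (x' j - xstar))\<^sup>2)"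
      by (rule sum.distrib)
    also have "\<dots> = (1 / real n) * (\<Sum>j<n. SP - D j (\<phi> j) + D j x) + c * SE"
      by (simp only: sum_distrib_left[symmetric] SE_def)
    also have "\<dots> = (real n * SP - SP + SD) / real n + c * SE" unfolding sumeq by simp
    also have "\<dots> \<le> (1 - \<gamma> * \<mu>) * (SP + real n * c * d)" by (rule comb)
    also have "\<dots> = real n * \<rho> * T st"
      using n0 by (simp add: T_def st \<rho>_def SP_def d_def Dv_def field_simps)
    finally show ?thesis .
  qed
  have rho0: "\<rho> \<ge> 0" using gm0 by (simp add: \<rho>_def)
  have E: "expect_seq n k (\<lambda>js. T (saga_run n g h \<gamma> x0 js)) \<le> \<rho> ^ k * T (x0, \<lambda>_. x0)"
    by (rule expect_iter[OF n0 rho0 step])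
  have Tge: "(norm (fst st - xstar))\<^sup>2 \<le> T st / c" for st
  proof -
    have "(\<Sum>i<n. D i (snd st i)) \<ge> 0" by (intro sum_nonneg D0) auto
    hence "c * (norm (fst st - xstar))\<^sup>2 \<le> T st" unfolding T_def using n0 by simp
    thus ?thesis using cpos by (simp add: field_simps)
  qed
  have "expect_seq n k (\<lambda>js. (norm (fst (saga_run n g h \<gamma> x0 js) - xstar))\<^sup>2)
      \<le> expect_seq n k (\<lambda>js. T (saga_run n g h \<gamma> x0 js) / c)"
    by (intro expect_mono Tge)
  also have "\<dots> = expect_seq n k (\<lambda>js. T (saga_run n g h \<gamma> x0 js)) / c" by (rule expect_div)
  also have "\<dots> \<le> \<rho> ^ k * T (x0, \<lambda>_. x0) / c" using E cpos by (intro divide_right_mono) auto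
  also have "T (x0, \<lambda>_. x0) = (f x0 - f' xstar \<bullet> (x0 - xstar) - f xstar) + c * (norm (x0 - xstar))\<^sup>2"
    unfolding T_def D_def f_def f'_def
    by (simp add: sum_subtractf inner_sum_left right_diff_distrib)
  also have "\<rho> ^ k * ((f x0 - f' xstar \<bullet> (x0 - xstar) - f xstar) + c * (norm (x0 - xstar))\<^sup>2) / c
      = \<rho> ^ k * ((norm (x0 - xstar))\<^sup>2 + (1 / c) * (f x0 - f' xstar \<bullet> (x0 - xstar) - f xstar))"
    using cpos by (simp add: field_simps)
  also have "\<dots> \<le> \<rho> ^ k * ((norm (x0 - xstar))\<^sup>2 + real n / (\<mu> * real n + L) * (f x0 - f' xstar \<bullet> (x0 - xstar) - f xstar))"
  proof -
    have D00: "f x0 - f' xstar \<bullet> (x0 - xstar) - f xstar \<ge> 0"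
    proof -
      have "(\<Sum>i<n. D i x0) \<ge> 0" by (intro sum_nonneg D0) auto
      moreover have "(\<Sum>i<n. D i x0) = real n * (f x0 - f' xstar \<bullet> (x0 - xstar) - f xstar)"
        using n0 unfolding D_def f_def f'_def by (simp add: sum_subtractf inner_sum_left algebra_simps sum.distrib)
      ultimately show ?thesis using n0 by (simp add: zero_le_mult_iff)
    qed
    have "1 / c \<le> real n / (\<mu> * real n + L)" using PF by simp
    hence "(1 / c) * (f x0 - f' xstar \<bullet> (x0 - xstar) - f xstar) \<le> real n / (\<mu> * real n + L) * (f x0 - f' xstar \<bullet> (x0 - xstar) - f xstar)"
      using D00 by (intro mult_right_mono) auto
    thus ?thesis using rho0 by (intro mult_left_mono) auto
  qed
  also have "\<rho> = 1 - \<mu> / (2 * (\<mu> * real n + L))" by (simp add: \<rho>_def gamma)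
  finally show ?thesis .
qed

end
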